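(* Let $\mathcal A$ be a weakly amenable Banach algebra and let $I$ be a closed two-sided ideal of $\mathcal A$ with a bounded approximate identity. If either (i) $I$ is Arens regular, or (ii) $\mathcal A$ is Arens regular, then $\mathcal A$ is $I$-weakly amenable, i.e. $H^1(\mathcal A,I^* )=\{0\}$.
   Context: $I^*$ is a Banach $\mathcal A$-bimodule with $\langle x,a\cdot f\rangle=\langle xa,f\rangle$, $\langle x,f\cdot a\rangle=\langle ax,f\rangle$. A derivation $D:\mathcal A\to Z$ is a continuous linear map with $D(ab)=a\cdot D(b)+D(a)\cdot b$; it is inner if $D(a)=a\cdot z-z\cdot a$ for some $z\in Z$; $H^1(\mathcal A,Z)=\{0\}$ means every derivation is inner. $\mathcal A$ is weakly amenable if $H^1(\mathcal A,\mathcal A^* )=\{0\}$. *)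

theory Defs
  imports "HOL-Analysis.Analysis"
begin

text \<open>Banach algebras are modelled by the type class real_normed_algebra + banach
 (real scalars, no unit required).  A closed subspace B of the algebra has dual
 space B*, represented by functions 'a => real which are linear and bounded on B
 and vanish outside B (a canonical representative of each functional on B).\<close>

definition closed_ideal :: "'a::{real_normed_algebra,banach} set \<Rightarrow> bool" where
  "closed_ideal I \<longleftrightarrow> subspace I \<and> closed I \<and> (\<forall>a x. x \<in> I \<longrightarrow> a * x \<in> I \<and> x * a \<in> I)"

definition dual :: "'a::real_normed_vector set \<Rightarrow> ('a \<Rightarrow> real) set" where
  "dual B = {f. (\<forall>x y. x \<in> B \<longrightarrow> y \<in> B \<longrightarrow> f (x + y) = f x + f y)
               \<and> (\<forall>c x. x \<in> B \<longrightarrow> f (c *\<^sub>R x) = c * f x)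
               \<and> (\<exists>K. \<forall>x\<in>B. \<bar>f x\<bar> \<le> K * norm x)
               \<and> (\<forall>x. x \<notin> B \<longrightarrow> f x = 0)}"

definition dnorm :: "'a::real_normed_vector set \<Rightarrow> ('a \<Rightarrow> real) \<Rightarrow> real" where
  "dnorm B f = Sup {\<bar>f x\<bar> | x. x \<in> B \<and> norm x \<le> 1}"

definition bidual :: "'a::real_normed_vector set \<Rightarrow> (('a \<Rightarrow> real) \<Rightarrow> real) set" where
  "bidual B = {m. (\<forall>f g. f \<in> dual B \<longrightarrow> g \<in> dual B \<longrightarrow> m (\<lambda>x. f x + g x) = m f + m g)
               \<and> (\<forall>c f. f \<in> dual B \<longrightarrow> m (\<lambda>x. c * f x) = c * m f)
               \<and> (\<exists>K. \<forall>f\<in>dual B. \<bar>m f\<bar> \<le> K * dnorm B f)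
               \<and> (\<forall>f. f \<notin> dual B \<longrightarrow> m f = 0)}"

text \<open>Module actions on B*: dmod_left B a f is a\<cdot>f with (a\<cdot>f)(x) = f(xa);
  dmod_right B f a is f\<cdot>a with (f\<cdot>a)(x) = f(ax).\<close>
definition dmod_left :: "'a::real_normed_algebra set \<Rightarrow> 'a \<Rightarrow> ('a \<Rightarrow> real) \<Rightarrow> ('a \<Rightarrow> real)" where
  "dmod_left B a f = (\<lambda>x. if x \<in> B then f (x * a) else 0)"

definition dmod_right :: "'a::real_normed_algebra set \<Rightarrow> ('a \<Rightarrow> real) \<Rightarrow> 'a \<Rightarrow> ('a \<Rightarrow> real)" where
  "dmod_right B f a = (\<lambda>x. if x \<in> B then f (a * x) else 0)"

text \<open>First and second Arens products on B**:
  <m \<box> n, f> = <m, n\<cdot>f>, <n\<cdot>f, a> = <n, f\<cdot>a>;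
  <m \<diamond> n, f> = <n, f\<cdot>m>, <f\<cdot>m, a> = <m, a\<cdot>f>.\<close>
definition arens1 :: "'a::real_normed_algebra set \<Rightarrow> (('a \<Rightarrow> real) \<Rightarrow> real) \<Rightarrow> (('a \<Rightarrow> real) \<Rightarrow> real) \<Rightarrow> (('a \<Rightarrow> real) \<Rightarrow> real)" where
  "arens1 B m n = (\<lambda>f. if f \<in> dual B then m (\<lambda>a. if a \<in> B then n (dmod_right B f a) else 0) else 0)"

definition arens2 :: "'a::real_normed_algebra set \<Rightarrow> (('a \<Rightarrow> real) \<Rightarrow> real) \<Rightarrow> (('a \<Rightarrow> real) \<Rightarrow> real) \<Rightarrow> (('a \<Rightarrow> real) \<Rightarrow> real)" where
  "arens2 B m n = (\<lambda>f. if f \<in> dual B then n (\<lambda>a. if a \<in> B then m (dmod_left B a f) else 0) else 0)"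

definition arens_regular :: "'a::real_normed_algebra set \<Rightarrow> bool" where
  "arens_regular B \<longleftrightarrow> (\<forall>m\<in>bidual B. \<forall>n\<in>bidual B. arens1 B m n = arens2 B m n)"

text \<open>Bounded approximate identity for I: a bounded net (e) in I with e x \<rightarrow> x, x e \<rightarrow> x
  for all x in I; the net is represented by its image filter F on the algebra.\<close>
definition has_bai :: "'a::real_normed_algebra set \<Rightarrow> bool" where
  "has_bai I \<longleftrightarrow> (\<exists>F::'a filter. \<exists>K. F \<noteq> bot \<and> (\<forall>\<^sub>F e in F. e \<in> I \<and> norm e \<le> K)
      \<and> (\<forall>x\<in>I. ((\<lambda>e. e * x) \<longlongrightarrow> x) F \<and> ((\<lambda>e. x * e) \<longlongrightarrow> x) F))"

definition derivation_into_dual :: "'a::real_normed_algebra set \<Rightarrow> ('a \<Rightarrow> ('a \<Rightarrow> real)) \<Rightarrow> bool" where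
  "derivation_into_dual B D \<longleftrightarrow> (\<forall>a. D a \<in> dual B)
     \<and> (\<forall>a b. D (a + b) = (\<lambda>x. D a x + D b x))
     \<and> (\<forall>c a. D (c *\<^sub>R a) = (\<lambda>x. c * D a x))
     \<and> (\<exists>K. \<forall>a. dnorm B (D a) \<le> K * norm a)
     \<and> (\<forall>a b. D (a * b) = (\<lambda>x. dmod_left B a (D b) x + dmod_right B (D a) b x))"

definition inner_derivation_into_dual :: "'a::real_normed_algebra set \<Rightarrow> ('a \<Rightarrow> ('a \<Rightarrow> real)) \<Rightarrow> bool" where
  "inner_derivation_into_dual B D \<longleftrightarrow>
     (\<exists>z\<in>dual B. \<forall>a. D a = (\<lambda>x. dmod_left B a z x - dmod_right B z a x))"

definition H1_dual_trivial :: "'a::real_normed_algebra set \<Rightarrow> bool" where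
  "H1_dual_trivial B \<longleftrightarrow> (\<forall>D. derivation_into_dual B D \<longrightarrow> inner_derivation_into_dual B D)"

definition weakly_amenable :: "'a::real_normed_algebra itself \<Rightarrow> bool" where
  "weakly_amenable _ \<longleftrightarrow> H1_dual_trivial (UNIV :: 'a set)"

end

theory Submission
  imports Defs
begin


lemma exists_ultra:
  fixes F :: "'b filter"
  assumes "F \<noteq> bot"
  shows "\<exists>U. U \<noteq> bot \<and> U \<le> F \<and> (\<forall>P. eventually P U \<or> eventually (\<lambda>x. \<not> P x) U)"
proof -
  define A where "A = {G. G \<noteq> bot \<and> G \<le> F}"
  have po: "partial_order_on A (relation_of (\<lambda>a u. u \<le> a) A)"
    by (rule partial_order_on_relation_ofI) auto
  have ch: "\<exists>u \<in> A. \<forall>a \<in> C. u \<le> a" if C: "C \<in> Chains (relation_of (\<lambda>a u. u \<le> a) A)" for C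
  proof (cases "C = {}")
    case True then show ?thesis using assms by (auto simp: A_def)
  next
    case False
    have CA: "C \<subseteq> A" using C unfolding Chains_def relation_of_def by auto
    have tot: "\<And>x y. x \<in> C \<Longrightarrow> y \<in> C \<Longrightarrow> x \<le> y \<or> y \<le> x"
      using C unfolding Chains_def relation_of_def by auto
    have ev: "eventually P (Inf C) \<longleftrightarrow> (\<exists>b\<in>C. eventually P b)" for P
    proof (rule eventually_Inf_base[OF False])
      fix F G assume "F \<in> C" "G \<in> C"
      then show "\<exists>x\<in>C. x \<le> inf F G" using tot[of F G]
        by (metis inf.absorb_iff2 inf.orderE order_refl)
    qed
    have "Inf C \<noteq> bot"
    proof
      assume "Inf C = bot"
      then have "eventually (\<lambda>_. False) (Inf C)" by simp
      then obtain b where "b \<in> C" "eventually (\<lambda>_. False) b" using ev by blast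
      then show False using CA by (auto simp: A_def eventually_False)
    qed
    moreover have "Inf C \<le> F"
      using False CA by (metis A_def Inf_lower2 all_not_in_conv mem_Collect_eq subsetD)
    ultimately show ?thesis by (auto simp: A_def intro!: bexI[of _ "Inf C"] Inf_lower)
  qed
  obtain U where U: "U \<in> A" and max: "\<And>a. a \<in> A \<Longrightarrow> a \<le> U \<Longrightarrow> a = U"
    using predicate_Zorn[OF po ch] by blast
  have "eventually P U \<or> eventually (\<lambda>x. \<not> P x) U" for P
  proof (rule ccontr)
    assume n: "\<not> (eventually P U \<or> eventually (\<lambda>x. \<not> P x) U)"
    define G where "G = inf U (principal {x. P x})"
    have "G \<noteq> bot"
    proof
      assume "G = bot"
      then have "eventually (\<lambda>_. False) G" by simp
      then obtain Q where "eventually Q U" "\<forall>x. Q x \<longrightarrow> P x \<longrightarrow> False"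
        unfolding G_def eventually_inf_principal by (auto elim: eventually_mono)
      then have "eventually (\<lambda>x. \<not> P x) U" by (auto elim: eventually_mono)
      with n show False by blast
    qed
    moreover have "G \<le> U" by (simp add: G_def)
    ultimately have "G \<in> A" using U by (auto simp: A_def)
    with max \<open>G \<le> U\<close> have "G = U" by blast
    moreover have "eventually P G" unfolding G_def by (simp add: eventually_inf_principal)
    ultimately show False using n by simp
  qed
  then show ?thesis using U by (auto simp: A_def)
qed

lemma ultra_conv:
  fixes h :: "'b \<Rightarrow> real"
  assumes "U \<noteq> bot" "\<And>P. eventually P U \<or> eventually (\<lambda>x. \<not> P x) U"
    and "eventually (\<lambda>e. \<bar>h e\<bar> \<le> c) U"
  shows "\<exists>L. (h \<longlongrightarrow> L) U"
proof -
  have "compact {-c..c}" by simp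
  moreover have "filtermap h U \<noteq> bot" using assms(1) by (simp add: filtermap_bot_iff)
  moreover have "eventually (\<lambda>x. x \<in> {-c..c}) (filtermap h U)"
    using assms(3) by (auto simp: eventually_filtermap elim!: eventually_mono)
  ultimately obtain x where x: "inf (nhds x) (filtermap h U) \<noteq> bot"
    unfolding compact_filter by blast
  have "(h \<longlongrightarrow> x) U"
  proof (rule topological_tendstoI)
    fix S assume S: "open S" "x \<in> S"
    show "eventually (\<lambda>e. h e \<in> S) U"
    proof (rule ccontr)
      assume "\<not> eventually (\<lambda>e. h e \<in> S) U"
      then have "eventually (\<lambda>e. h e \<notin> S) U" using assms(2) by blast
      moreover have "eventually (\<lambda>y. y \<in> S) (nhds x)" using S by (rule eventually_nhds_in_open)
      ultimately have "eventually (\<lambda>_. False) (inf (nhds x) (filtermap h U))"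
        unfolding eventually_inf eventually_filtermap
        by (intro exI[of _ "\<lambda>y. y \<in> S"] exI[of _ "\<lambda>y. y \<notin> S"]) auto
      with x show False by (simp add: eventually_False)
    qed
  qed
  then show ?thesis by blast
qed

lemma dual_D:
  assumes "f \<in> dual B"
  shows "\<And>x y. x \<in> B \<Longrightarrow> y \<in> B \<Longrightarrow> f (x + y) = f x + f y"
    and "\<And>c x. x \<in> B \<Longrightarrow> f (c *\<^sub>R x) = c * f x"
    and "\<exists>K. \<forall>x\<in>B. \<bar>f x\<bar> \<le> K * norm x"
    and "\<And>x. x \<notin> B \<Longrightarrow> f x = 0"
  using assms unfolding dual_def by auto

lemma dualI:
  assumes "\<And>x y. x \<in> B \<Longrightarrow> y \<in> B \<Longrightarrow> f (x + y) = f x + f y"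
    and "\<And>c x. x \<in> B \<Longrightarrow> f (c *\<^sub>R x) = c * f x"
    and "\<And>x. x \<in> B \<Longrightarrow> \<bar>f x\<bar> \<le> K * norm x"
    and "\<And>x. x \<notin> B \<Longrightarrow> f x = 0"
  shows "f \<in> dual B"
  using assms unfolding dual_def by blast

lemma dual_zero:
  assumes "f \<in> dual B" "subspace B"
  shows "f 0 = 0"
proof -
  have "0 \<in> B" using assms(2) by (simp add: subspace_0)
  then have "f (0 *\<^sub>R 0) = 0 * f 0" using dual_D(2)[OF assms(1)] by blast
  then show ?thesis by simp
qed

lemma dual_diff:
  assumes "f \<in> dual B" "subspace B" "x \<in> B" "y \<in> B"
  shows "f (x - y) = f x - f y"
proof -
  have "-y \<in> B" using assms by (simp add: subspace_neg)
  have "f (x + - y) = f x + f (-y)" using dual_D(1)[OF assms(1) assms(3) \<open>-y \<in> B\<close>] .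
  moreover have "f ((-1) *\<^sub>R y) = (-1) * f y" using dual_D(2)[OF assms(1) assms(4)] .
  ultimately show ?thesis by simp
qed

lemma dnorm_bdd:
  assumes "f \<in> dual B"
  shows "bdd_above {\<bar>f x\<bar> | x. x \<in> B \<and> norm x \<le> 1}"
proof -
  obtain K where K: "\<forall>x\<in>B. \<bar>f x\<bar> \<le> K * norm x" using dual_D(3)[OF assms] by blast
  have "\<bar>f x\<bar> \<le> max K 0" if "x \<in> B" "norm x \<le> 1" for x
  proof -
    have "\<bar>f x\<bar> \<le> K * norm x" using K that by blast
    also have "\<dots> \<le> max K 0 * norm x" by (simp add: mult_right_mono)
    also have "\<dots> \<le> max K 0" using that by (simp add: mult_left_le)
    finally show ?thesis .
  qed
  then show ?thesis unfolding bdd_above_def by blast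
qed

lemma dnorm_nonneg:
  assumes "f \<in> dual B" "subspace B"
  shows "0 \<le> dnorm B f"
proof -
  have "0 \<in> B" using assms(2) by (simp add: subspace_0)
  then have "\<bar>f 0\<bar> \<in> {\<bar>f x\<bar> | x. x \<in> B \<and> norm x \<le> 1}"
    by (intro CollectI exI[of _ 0]) simp
  then have "\<bar>f 0\<bar> \<le> dnorm B f" unfolding dnorm_def by (rule cSup_upper[OF _ dnorm_bdd[OF assms(1)]])
  then show ?thesis by simp
qed

lemma dual_bound:
  assumes "f \<in> dual B" "subspace B" "x \<in> B"
  shows "\<bar>f x\<bar> \<le> dnorm B f * norm x"
proof (cases "x = 0")
  case True then show ?thesis using dual_zero[OF assms(1,2)] by simp
next
  case False
  define y where "y = (1 / norm x) *\<^sub>R x"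
  have yB: "y \<in> B" using assms by (simp add: y_def subspace_scale)
  have ny: "norm y \<le> 1" using False by (simp add: y_def)
  have "\<bar>f y\<bar> \<le> dnorm B f" unfolding dnorm_def
    by (rule cSup_upper) (use yB ny dnorm_bdd[OF assms(1)] in auto)
  moreover have "f y = f x / norm x" using dual_D(2)[OF assms(1) assms(3)] by (simp add: y_def)
  ultimately have "\<bar>f x\<bar> / norm x \<le> dnorm B f" by (simp add: abs_div)
  then show ?thesis using False by (simp add: divide_le_eq mult.commute)
qed

lemma dnorm_le:
  assumes "0 \<in> B" "\<And>x. x \<in> B \<Longrightarrow> norm x \<le> 1 \<Longrightarrow> \<bar>h x\<bar> \<le> C"
  shows "dnorm B h \<le> C"
  unfolding dnorm_def by (rule cSup_least) (use assms in auto)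

lemma dual_add_mem:
  assumes "f \<in> dual B" "g \<in> dual B"
  shows "(\<lambda>x. f x + g x) \<in> dual B"
proof -
  obtain K1 where K1: "\<forall>x\<in>B. \<bar>f x\<bar> \<le> K1 * norm x" using dual_D(3)[OF assms(1)] by blast
  obtain K2 where K2: "\<forall>x\<in>B. \<bar>g x\<bar> \<le> K2 * norm x" using dual_D(3)[OF assms(2)] by blast
  show ?thesis
  proof (rule dualI[where K="K1+K2"])
    fix x assume "x \<in> B"
    then have "\<bar>f x\<bar> \<le> K1 * norm x" "\<bar>g x\<bar> \<le> K2 * norm x" using K1 K2 by auto
    then show "\<bar>f x + g x\<bar> \<le> (K1 + K2) * norm x" by (simp add: distrib_right abs_triangle_ineq add_mono order_trans)
  next
    fix x y assume "x \<in> B" "y \<in> B"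
    then show "f (x + y) + g (x + y) = (f x + g x) + (f y + g y)"
      using dual_D(1)[OF assms(1)] dual_D(1)[OF assms(2)] by simp
  next
    fix c x assume "x \<in> B"
    then show "f (c *\<^sub>R x) + g (c *\<^sub>R x) = c * (f x + g x)"
      using dual_D(2)[OF assms(1)] dual_D(2)[OF assms(2)] by (simp add: distrib_left)
  next
    fix x assume "x \<notin> B"
    then show "f x + g x = 0" using dual_D(4)[OF assms(1)] dual_D(4)[OF assms(2)] by simp
  qed
qed

lemma dual_scale_mem:
  assumes "f \<in> dual B"
  shows "(\<lambda>x. c * f x) \<in> dual B"
proof -
  obtain K1 where K1: "\<forall>x\<in>B. \<bar>f x\<bar> \<le> K1 * norm x" using dual_D(3)[OF assms(1)] by blast
  show ?thesis
  proof (rule dualI[where K="\<bar>c\<bar>*K1"])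
    fix x assume "x \<in> B"
    then have "\<bar>f x\<bar> \<le> K1 * norm x" using K1 by auto
    then show "\<bar>c * f x\<bar> \<le> (\<bar>c\<bar> * K1) * norm x"
      by (simp add: abs_mult mult.assoc mult_left_mono)
  next
    fix x y assume "x \<in> B" "y \<in> B"
    then show "c * f (x + y) = c * f x + c * f y"
      using dual_D(1)[OF assms(1)] by (simp add: distrib_left)
  next
    fix d x assume "x \<in> B"
    then show "c * f (d *\<^sub>R x) = d * (c * f x)"
      using dual_D(2)[OF assms(1)] by simp
  next
    fix x assume "x \<notin> B"
    then show "c * f x = 0" using dual_D(4)[OF assms(1)] by simp
  qed
qed



locale bai_setup =
  fixes I :: "'a::{real_normed_algebra,banach} set" and U :: "'a filter" and K :: real
  assumes subI: "subspace I"
    and idI: "\<And>a x. x \<in> I \<Longrightarrow> a * x \<in> I \<and> x * a \<in> I"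
    and ultra: "\<And>P. eventually P U \<or> eventually (\<lambda>x. \<not> P x) U"
    and nb: "U \<noteq> bot"
    and evI: "eventually (\<lambda>e. e \<in> I \<and> norm e \<le> K) U"
    and Kpos: "0 \<le> K"
    and lconv: "\<And>x. x \<in> I \<Longrightarrow> ((\<lambda>e. e * x) \<longlongrightarrow> x) U"
    and rconv: "\<And>x. x \<in> I \<Longrightarrow> ((\<lambda>e. x * e) \<longlongrightarrow> x) U"
begin

definition Lam :: "('a \<Rightarrow> real) \<Rightarrow> real" where "Lam h = Lim U h"

definition ebdd :: "('a \<Rightarrow> real) \<Rightarrow> bool" where
  "ebdd h \<longleftrightarrow> (\<exists>c. eventually (\<lambda>e. \<bar>h e\<bar> \<le> c) U)"

lemma Lam_tendsto: "(h \<longlongrightarrow> L) U \<Longrightarrow> Lam h = L"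
  unfolding Lam_def using nb by (simp add: tendsto_Lim)

lemma Lam_conv: "ebdd h \<Longrightarrow> (h \<longlongrightarrow> Lam h) U"
  unfolding ebdd_def using ultra_conv[OF nb ultra] Lam_tendsto by metis

lemma Lam_add: "ebdd h1 \<Longrightarrow> ebdd h2 \<Longrightarrow> Lam (\<lambda>e. h1 e + h2 e) = Lam h1 + Lam h2"
  by (intro Lam_tendsto tendsto_add Lam_conv)

lemma Lam_scale: "ebdd h \<Longrightarrow> Lam (\<lambda>e. c * h e) = c * Lam h"
  by (intro Lam_tendsto tendsto_mult_left Lam_conv)

lemma Lam_cong: "eventually (\<lambda>e. h1 e = h2 e) U \<Longrightarrow> Lam h1 = Lam h2"
  unfolding Lam_def by (rule Lim_cong) auto

lemma Lam_bound: assumes "eventually (\<lambda>e. \<bar>h e\<bar> \<le> c) U" shows "\<bar>Lam h\<bar> \<le> c"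
proof -
  have "ebdd h" using assms ebdd_def by blast
  then have "((\<lambda>e. \<bar>h e\<bar>) \<longlongrightarrow> \<bar>Lam h\<bar>) U" by (intro tendsto_rabs Lam_conv)
  then show ?thesis using assms nb by (intro tendsto_upperbound) auto
qed

lemma gbound:
  assumes g: "g \<in> dual B" "subspace B"
    and w: "\<And>e. e \<in> I \<Longrightarrow> norm e \<le> K \<Longrightarrow> w e \<in> B \<and> norm (w e) \<le> C"
  shows "eventually (\<lambda>e. \<bar>g (w e)\<bar> \<le> dnorm B g * C) U"
  using evI
proof (rule eventually_mono)
  fix e assume "e \<in> I \<and> norm e \<le> K"
  then have wB: "w e \<in> B" and wC: "norm (w e) \<le> C" using w by auto
  show "\<bar>g (w e)\<bar> \<le> dnorm B g * C"
    by (rule order_trans[OF dual_bound[OF g \<open>w e \<in> B\<close>] mult_left_mono[OF _ dnorm_nonneg[OF g]]])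
      (rule \<open>norm (w e) \<le> C\<close>)
qed

lemma gebdd:
  assumes g: "g \<in> dual B" "subspace B"
    and w: "\<And>e. e \<in> I \<Longrightarrow> norm e \<le> K \<Longrightarrow> w e \<in> B \<and> norm (w e) \<le> C"
  shows "ebdd (\<lambda>e. g (w e))"
  unfolding ebdd_def using gbound[OF assms] by (rule exI)

lemma gLam_bound:
  assumes g: "g \<in> dual B" "subspace B"
    and w: "\<And>e. e \<in> I \<Longrightarrow> norm e \<le> K \<Longrightarrow> w e \<in> B \<and> norm (w e) \<le> C"
  shows "\<bar>Lam (\<lambda>e. g (w e))\<bar> \<le> dnorm B g * C"
  using Lam_bound[OF gbound[OF assms]] .

lemma norm_eK: fixes e a :: 'a assumes "norm e \<le> K" shows "norm (e * a) \<le> K * norm a"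
  using order_trans[OF norm_mult_ineq[of e a] mult_right_mono[OF assms norm_ge_zero]] .
lemma norm_Ke: fixes e a :: 'a assumes "norm e \<le> K" shows "norm (a * e) \<le> norm a * K"
  using order_trans[OF norm_mult_ineq[of a e] mult_left_mono[OF assms norm_ge_zero]] .

lemma cont_right:
  assumes g: "g \<in> dual B" "subspace B" and IB: "I \<subseteq> B" and y: "y \<in> I"
  shows "Lam (\<lambda>e. g (y * e)) = g y"
proof (rule Lam_tendsto)
  have "((\<lambda>e. g (y * e) - g y) \<longlongrightarrow> 0) U"
  proof (rule Lim_null_comparison)
    show "eventually (\<lambda>e. norm (g (y * e) - g y) \<le> dnorm B g * norm (y * e - y)) U"
      using evI
    proof (rule eventually_mono)
      fix e assume "e \<in> I \<and> norm e \<le> K"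
      then have "y * e \<in> B" "y \<in> B" using idI IB y by auto
      then have "g (y * e) - g y = g (y * e - y)" using dual_diff[OF g] by simp
      moreover have "y * e - y \<in> B" using \<open>y * e \<in> B\<close> \<open>y \<in> B\<close> g(2) by (simp add: subspace_diff)
      ultimately show "norm (g (y * e) - g y) \<le> dnorm B g * norm (y * e - y)"
        using dual_bound[OF g] by simp
    qed
    have "((\<lambda>e. y * e - y) \<longlongrightarrow> 0) U" using rconv[OF y] by (simp add: LIM_zero)
    then show "((\<lambda>e. dnorm B g * norm (y * e - y)) \<longlongrightarrow> 0) U"
      by (intro tendsto_mult_right_zero tendsto_norm_zero)
  qed
  then show "((\<lambda>e. g (y * e)) \<longlongrightarrow> g y) U" by (rule LIM_zero_cancel)
qed

lemma cont_left:
  assumes g: "g \<in> dual B" "subspace B" and IB: "I \<subseteq> B" and y: "y \<in> I"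
  shows "Lam (\<lambda>e. g (e * y)) = g y"
proof (rule Lam_tendsto)
  have "((\<lambda>e. g (e * y) - g y) \<longlongrightarrow> 0) U"
  proof (rule Lim_null_comparison)
    show "eventually (\<lambda>e. norm (g (e * y) - g y) \<le> dnorm B g * norm (e * y - y)) U"
      using evI
    proof (rule eventually_mono)
      fix e assume "e \<in> I \<and> norm e \<le> K"
      then have "e * y \<in> B" "y \<in> B" using idI IB y by auto
      then have "g (e * y) - g y = g (e * y - y)" using dual_diff[OF g] by simp
      moreover have "e * y - y \<in> B" using \<open>e * y \<in> B\<close> \<open>y \<in> B\<close> g(2) by (simp add: subspace_diff)
      ultimately show "norm (g (e * y) - g y) \<le> dnorm B g * norm (e * y - y)"
        using dual_bound[OF g] by simp
    qed
    have "((\<lambda>e. e * y - y) \<longlongrightarrow> 0) U" using lconv[OF y] by (simp add: LIM_zero)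
    then show "((\<lambda>e. dnorm B g * norm (e * y - y)) \<longlongrightarrow> 0) U"
      by (intro tendsto_mult_right_zero tendsto_norm_zero)
  qed
  then show "((\<lambda>e. g (e * y)) \<longlongrightarrow> g y) U" by (rule LIM_zero_cancel)
qed

end




lemma dmod_right_dual:
  assumes f: "f \<in> dual B" "subspace B" and c: "\<And>x. x \<in> B \<Longrightarrow> c * x \<in> B"
  shows "dmod_right B f c \<in> dual B"
proof (rule dualI[where K="dnorm B f * norm c"])
  fix x y assume "x \<in> B" "y \<in> B"
  then show "dmod_right B f c (x + y) = dmod_right B f c x + dmod_right B f c y"
    using c dual_D(1)[OF f(1)] f(2) by (simp add: dmod_right_def distrib_left subspace_add)
next
  fix d x assume "x \<in> B"
  then show "dmod_right B f c (d *\<^sub>R x) = d * dmod_right B f c x"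
    using c dual_D(2)[OF f(1)] f(2) by (simp add: dmod_right_def subspace_scale)
next
  fix x assume x: "x \<in> B"
  have "\<bar>f (c * x)\<bar> \<le> dnorm B f * norm (c * x)" using dual_bound[OF f c[OF x]] .
  also have "\<dots> \<le> dnorm B f * (norm c * norm x)"
    by (rule mult_left_mono[OF norm_mult_ineq dnorm_nonneg[OF f]])
  finally show "\<bar>dmod_right B f c x\<bar> \<le> dnorm B f * norm c * norm x"
    using x by (simp add: dmod_right_def mult.assoc)
next
  fix x assume "x \<notin> B" then show "dmod_right B f c x = 0" by (simp add: dmod_right_def)
qed

lemma dmod_left_dual:
  assumes f: "f \<in> dual B" "subspace B" and c: "\<And>x. x \<in> B \<Longrightarrow> x * c \<in> B"
  shows "dmod_left B c f \<in> dual B"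
proof (rule dualI[where K="dnorm B f * norm c"])
  fix x y assume "x \<in> B" "y \<in> B"
  then show "dmod_left B c f (x + y) = dmod_left B c f x + dmod_left B c f y"
    using c dual_D(1)[OF f(1)] f(2) by (simp add: dmod_left_def distrib_right subspace_add)
next
  fix d x assume "x \<in> B"
  then show "dmod_left B c f (d *\<^sub>R x) = d * dmod_left B c f x"
    using c dual_D(2)[OF f(1)] f(2) by (simp add: dmod_left_def subspace_scale)
next
  fix x assume x: "x \<in> B"
  have "\<bar>f (x * c)\<bar> \<le> dnorm B f * norm (x * c)" using dual_bound[OF f c[OF x]] .
  also have "\<dots> \<le> dnorm B f * (norm x * norm c)"
    by (rule mult_left_mono[OF norm_mult_ineq dnorm_nonneg[OF f]])
  finally show "\<bar>dmod_left B c f x\<bar> \<le> dnorm B f * norm c * norm x"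
    using x by (simp add: dmod_left_def mult_ac)
next
  fix x assume "x \<notin> B" then show "dmod_left B c f x = 0" by (simp add: dmod_left_def)
qed

context bai_setup begin

lemma Mw_bidual:
  assumes B: "subspace B" and w: "\<And>e. e \<in> I \<Longrightarrow> norm e \<le> K \<Longrightarrow> w e \<in> B \<and> norm (w e) \<le> C"
  shows "(\<lambda>h. if h \<in> dual B then Lam (\<lambda>e. h (w e)) else 0) \<in> bidual B"
  unfolding bidual_def
proof (intro CollectI conjI allI impI)
  fix f g assume f: "f \<in> dual B" and g: "g \<in> dual B"
  have fg: "(\<lambda>x. f x + g x) \<in> dual B" using dual_add_mem[OF f g] .
  have "Lam (\<lambda>e. f (w e) + g (w e)) = Lam (\<lambda>e. f (w e)) + Lam (\<lambda>e. g (w e))"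
    by (rule Lam_add[OF gebdd[OF f B w] gebdd[OF g B w]])
  then show "(if (\<lambda>x. f x + g x) \<in> dual B then Lam (\<lambda>e. f (w e) + g (w e)) else 0) =
    (if f \<in> dual B then Lam (\<lambda>e. f (w e)) else 0) + (if g \<in> dual B then Lam (\<lambda>e. g (w e)) else 0)"
    using f g fg by simp
next
  fix c f assume f: "f \<in> dual B"
  have fc: "(\<lambda>x. c * f x) \<in> dual B" using dual_scale_mem[OF f] .
  have "Lam (\<lambda>e. c * f (w e)) = c * Lam (\<lambda>e. f (w e))"
    by (rule Lam_scale[OF gebdd[OF f B w]])
  then show "(if (\<lambda>x. c * f x) \<in> dual B then Lam (\<lambda>e. c * f (w e)) else 0) =
    c * (if f \<in> dual B then Lam (\<lambda>e. f (w e)) else 0)"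
    using f fc by simp
next
  show "\<exists>K. \<forall>f\<in>dual B. \<bar>if f \<in> dual B then Lam (\<lambda>e. f (w e)) else 0\<bar> \<le> K * dnorm B f"
  proof (intro exI ballI)
    fix f assume f: "f \<in> dual B"
    have "\<bar>Lam (\<lambda>e. f (w e))\<bar> \<le> dnorm B f * C" by (rule gLam_bound[OF f B w])
    then show "\<bar>if f \<in> dual B then Lam (\<lambda>e. f (w e)) else 0\<bar> \<le> C * dnorm B f"
      using f by (simp add: mult.commute)
  qed
next
  fix f assume "f \<notin> dual B"
  then show "(if f \<in> dual B then Lam (\<lambda>e. f (w e)) else 0) = 0" by simp
qed

lemma norm3: fixes c a e :: 'a assumes "norm e \<le> K"
  shows "norm (c * (a * e)) \<le> norm c * (norm a * K)"
proof -
  have "norm (c * (a * e)) \<le> norm c * norm (a * e)" by (rule norm_mult_ineq)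
  also have "\<dots> \<le> norm c * (norm a * K)" by (rule mult_left_mono[OF norm_Ke[OF assms] norm_ge_zero])
  finally show ?thesis .
qed

end


context bai_setup begin

lemma key:
  assumes B: "subspace B" and idB: "\<And>a x. x \<in> B \<Longrightarrow> a * x \<in> B \<and> x * a \<in> B"
    and IB: "I \<subseteq> B" and reg: "arens_regular B" and g: "g \<in> dual B"
  shows "Lam (\<lambda>e. g (e * a)) = Lam (\<lambda>e. g (a * e))"
proof -
  have gB: "g \<in> dual B" "subspace B" using g B by auto
  define Em where "Em = (\<lambda>h. if h \<in> dual B then Lam (\<lambda>e. h e) else 0)"
  define Nm where "Nm = (\<lambda>h. if h \<in> dual B then Lam (\<lambda>e. h (a * e)) else 0)"
  have Em: "Em \<in> bidual B" unfolding Em_def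
    using Mw_bidual[of B "\<lambda>e. e" K] B IB by auto
  have Nm: "Nm \<in> bidual B" unfolding Nm_def
  proof (rule Mw_bidual[of B "\<lambda>e. a * e" "norm a * K", OF B])
    fix e assume "e \<in> I" "norm e \<le> K"
    then show "a * e \<in> B \<and> norm (a * e) \<le> norm a * K" using idI IB norm_Ke by blast
  qed
  have "arens1 B Em Nm = arens2 B Em Nm" using reg Em Nm unfolding arens_regular_def by blast
  then have eq: "arens1 B Em Nm g = arens2 B Em Nm g" by simp
  define \<phi> where "\<phi> = (\<lambda>c. if c \<in> B then Nm (dmod_right B g c) else 0)"
  have \<phi>_eq: "\<phi> c = Lam (\<lambda>e'. g (c * (a * e')))" if c: "c \<in> B" for c
  proof -
    have "dmod_right B g c \<in> dual B" using dmod_right_dual[OF gB] idB by blast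
    then have "\<phi> c = Lam (\<lambda>e'. dmod_right B g c (a * e'))" using c by (simp add: \<phi>_def Nm_def)
    also have "\<dots> = Lam (\<lambda>e'. g (c * (a * e')))"
    proof (rule Lam_cong, rule eventually_mono[OF evI])
      fix e assume "e \<in> I \<and> norm e \<le> K"
      then have "a * e \<in> B" using idI IB by blast
      then show "dmod_right B g c (a * e) = g (c * (a * e))" by (simp add: dmod_right_def)
    qed
    finally show ?thesis .
  qed
  have w3: "c * (a * e) \<in> B \<and> norm (c * (a * e)) \<le> norm c * (norm a * K)"
    if "e \<in> I" "norm e \<le> K" for c e
    using that idI IB norm3 by blast
  have \<phi>_dual: "\<phi> \<in> dual B"
  proof (rule dualI[where K="dnorm B g * (norm a * K)"])
    fix c d assume c: "c \<in> B" and d: "d \<in> B"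
    then have "c + d \<in> B" using B by (simp add: subspace_add)
    then have "\<phi> (c + d) = Lam (\<lambda>e'. g ((c + d) * (a * e')))" by (rule \<phi>_eq)
    also have "\<dots> = Lam (\<lambda>e'. g (c * (a * e')) + g (d * (a * e')))"
    proof (rule Lam_cong, rule eventually_mono[OF evI])
      fix e assume "e \<in> I \<and> norm e \<le> K"
      then have "c * (a * e) \<in> B" "d * (a * e) \<in> B" using w3 by auto
      then show "g ((c + d) * (a * e)) = g (c * (a * e)) + g (d * (a * e))"
        using dual_D(1)[OF g] by (simp add: distrib_right)
    qed
    also have "\<dots> = Lam (\<lambda>e'. g (c * (a * e'))) + Lam (\<lambda>e'. g (d * (a * e')))"
      by (rule Lam_add[OF gebdd[OF gB w3] gebdd[OF gB w3]])
    finally show "\<phi> (c + d) = \<phi> c + \<phi> d" using \<phi>_eq c d by simp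
  next
    fix r c assume c: "c \<in> B"
    then have "r *\<^sub>R c \<in> B" using B by (simp add: subspace_scale)
    then have "\<phi> (r *\<^sub>R c) = Lam (\<lambda>e'. g ((r *\<^sub>R c) * (a * e')))" by (rule \<phi>_eq)
    also have "\<dots> = Lam (\<lambda>e'. r * g (c * (a * e')))"
    proof (rule Lam_cong, rule eventually_mono[OF evI])
      fix e assume "e \<in> I \<and> norm e \<le> K"
      then have "c * (a * e) \<in> B" using w3 by auto
      then show "g ((r *\<^sub>R c) * (a * e)) = r * g (c * (a * e))"
        using dual_D(2)[OF g] by simp
    qed
    also have "\<dots> = r * Lam (\<lambda>e'. g (c * (a * e')))"
      by (rule Lam_scale[OF gebdd[OF gB w3]])
    finally show "\<phi> (r *\<^sub>R c) = r * \<phi> c" using \<phi>_eq c by simp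
  next
    fix c assume c: "c \<in> B"
    have "\<bar>Lam (\<lambda>e'. g (c * (a * e')))\<bar> \<le> dnorm B g * (norm c * (norm a * K))"
      by (rule gLam_bound[OF gB w3])
    then show "\<bar>\<phi> c\<bar> \<le> dnorm B g * (norm a * K) * norm c" using \<phi>_eq[OF c] by (simp add: mult_ac)
  next
    fix c assume "c \<notin> B" then show "\<phi> c = 0" by (simp add: \<phi>_def)
  qed
  have A1: "arens1 B Em Nm g = Lam (\<lambda>e. g (e * a))"
  proof -
    have "arens1 B Em Nm g = Em \<phi>" using g unfolding arens1_def \<phi>_def by simp
    also have "\<dots> = Lam (\<lambda>e. \<phi> e)" using \<phi>_dual by (simp add: Em_def)
    also have "\<dots> = Lam (\<lambda>e. g (e * a))"
    proof (rule Lam_cong, rule eventually_mono[OF evI])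
      fix e assume e: "e \<in> I \<and> norm e \<le> K"
      then have eB: "e \<in> B" and ea: "e * a \<in> I" using IB idI by auto
      have "\<phi> e = Lam (\<lambda>e'. g (e * (a * e')))" by (rule \<phi>_eq[OF eB])
      also have "\<dots> = Lam (\<lambda>e'. g ((e * a) * e'))" by (simp add: mult.assoc)
      also have "\<dots> = g (e * a)" by (rule cont_right[OF gB IB ea])
      finally show "\<phi> e = g (e * a)" .
    qed
    finally show ?thesis .
  qed
  define \<psi> where "\<psi> = (\<lambda>c. if c \<in> B then Em (dmod_left B c g) else 0)"
  have \<psi>_eq: "\<psi> c = Lam (\<lambda>e. g (e * c))" if c: "c \<in> B" for c
  proof -
    have "dmod_left B c g \<in> dual B" using dmod_left_dual[OF gB] idB by blast
    then have "\<psi> c = Lam (\<lambda>e. dmod_left B c g e)" using c by (simp add: \<psi>_def Em_def)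
    also have "\<dots> = Lam (\<lambda>e. g (e * c))"
    proof (rule Lam_cong, rule eventually_mono[OF evI])
      fix e assume "e \<in> I \<and> norm e \<le> K"
      then have "e \<in> B" using IB by blast
      then show "dmod_left B c g e = g (e * c)" by (simp add: dmod_left_def)
    qed
    finally show ?thesis .
  qed
  have w2: "e * c \<in> B \<and> norm (e * c) \<le> K * norm c"
    if "e \<in> I" "norm e \<le> K" for c e
    using that idI IB norm_eK by blast
  have \<psi>_dual: "\<psi> \<in> dual B"
  proof (rule dualI[where K="dnorm B g * K"])
    fix c d assume c: "c \<in> B" and d: "d \<in> B"
    then have "c + d \<in> B" using B by (simp add: subspace_add)
    then have "\<psi> (c + d) = Lam (\<lambda>e. g (e * (c + d)))" by (rule \<psi>_eq)
    also have "\<dots> = Lam (\<lambda>e. g (e * c) + g (e * d))"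
    proof (rule Lam_cong, rule eventually_mono[OF evI])
      fix e assume "e \<in> I \<and> norm e \<le> K"
      then have "e * c \<in> B" "e * d \<in> B" using w2 by auto
      then show "g (e * (c + d)) = g (e * c) + g (e * d)"
        using dual_D(1)[OF g] by (simp add: distrib_left)
    qed
    also have "\<dots> = Lam (\<lambda>e. g (e * c)) + Lam (\<lambda>e. g (e * d))"
      by (rule Lam_add[OF gebdd[OF gB w2] gebdd[OF gB w2]])
    finally show "\<psi> (c + d) = \<psi> c + \<psi> d" using \<psi>_eq c d by simp
  next
    fix r c assume c: "c \<in> B"
    then have "r *\<^sub>R c \<in> B" using B by (simp add: subspace_scale)
    then have "\<psi> (r *\<^sub>R c) = Lam (\<lambda>e. g (e * (r *\<^sub>R c)))" by (rule \<psi>_eq)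
    also have "\<dots> = Lam (\<lambda>e. r * g (e * c))"
    proof (rule Lam_cong, rule eventually_mono[OF evI])
      fix e assume "e \<in> I \<and> norm e \<le> K"
      then have "e * c \<in> B" using w2 by auto
      then show "g (e * (r *\<^sub>R c)) = r * g (e * c)"
        using dual_D(2)[OF g] by simp
    qed
    also have "\<dots> = r * Lam (\<lambda>e. g (e * c))"
      by (rule Lam_scale[OF gebdd[OF gB w2]])
    finally show "\<psi> (r *\<^sub>R c) = r * \<psi> c" using \<psi>_eq c by simp
  next
    fix c assume c: "c \<in> B"
    have "\<bar>Lam (\<lambda>e. g (e * c))\<bar> \<le> dnorm B g * (K * norm c)"
      by (rule gLam_bound[OF gB w2])
    then show "\<bar>\<psi> c\<bar> \<le> dnorm B g * K * norm c" using \<psi>_eq[OF c] by (simp add: mult_ac)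
  next
    fix c assume "c \<notin> B" then show "\<psi> c = 0" by (simp add: \<psi>_def)
  qed
  have A2: "arens2 B Em Nm g = Lam (\<lambda>e. g (a * e))"
  proof -
    have "arens2 B Em Nm g = Nm \<psi>" using g unfolding arens2_def \<psi>_def by simp
    also have "\<dots> = Lam (\<lambda>e'. \<psi> (a * e'))" using \<psi>_dual by (simp add: Nm_def)
    also have "\<dots> = Lam (\<lambda>e'. g (a * e'))"
    proof (rule Lam_cong, rule eventually_mono[OF evI])
      fix e' assume e: "e' \<in> I \<and> norm e' \<le> K"
      then have aeB: "a * e' \<in> B" and ae: "a * e' \<in> I" using IB idI by auto
      have "\<psi> (a * e') = Lam (\<lambda>e. g (e * (a * e')))" by (rule \<psi>_eq[OF aeB])
      also have "\<dots> = g (a * e')" by (rule cont_left[OF gB IB ae])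
      finally show "\<psi> (a * e') = g (a * e')" .
    qed
    finally show ?thesis .
  qed
  show ?thesis using eq A1 A2 by simp
qed

end


context bai_setup begin

definition rho :: "('a \<Rightarrow> real) \<Rightarrow> ('a \<Rightarrow> real)" where
  "rho f = (\<lambda>a. Lam (\<lambda>e. f (e * a)))"

lemma wI: "e \<in> I \<Longrightarrow> norm e \<le> K \<Longrightarrow> e * x \<in> I \<and> norm (e * x) \<le> K * norm x"
  using idI norm_eK by blast

lemma rho_dual:
  assumes f: "f \<in> dual I"
  shows "rho f \<in> dual UNIV"
proof (rule dualI[where K="dnorm I f * K"])
  have fI: "f \<in> dual I" "subspace I" using f subI by auto
  fix x y :: 'a
  have "rho f (x + y) = Lam (\<lambda>e. f (e * x) + f (e * y))"
    unfolding rho_def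
  proof (rule Lam_cong, rule eventually_mono[OF evI])
    fix e assume "e \<in> I \<and> norm e \<le> K"
    then have "e * x \<in> I" "e * y \<in> I" using idI by auto
    then show "f (e * (x + y)) = f (e * x) + f (e * y)" using dual_D(1)[OF f] by (simp add: distrib_left)
  qed
  also have "\<dots> = rho f x + rho f y" unfolding rho_def
    by (rule Lam_add[OF gebdd[OF fI wI] gebdd[OF fI wI]])
  finally show "rho f (x + y) = rho f x + rho f y" .
next
  have fI: "f \<in> dual I" "subspace I" using f subI by auto
  fix r and x :: 'a
  have "rho f (r *\<^sub>R x) = Lam (\<lambda>e. r * f (e * x))"
    unfolding rho_def
  proof (rule Lam_cong, rule eventually_mono[OF evI])
    fix e assume "e \<in> I \<and> norm e \<le> K"
    then have "e * x \<in> I" using idI by auto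
    then show "f (e * (r *\<^sub>R x)) = r * f (e * x)" using dual_D(2)[OF f] by simp
  qed
  also have "\<dots> = r * rho f x" unfolding rho_def
    by (rule Lam_scale[OF gebdd[OF fI wI]])
  finally show "rho f (r *\<^sub>R x) = r * rho f x" .
next
  have fI: "f \<in> dual I" "subspace I" using f subI by auto
  fix x :: 'a
  have "\<bar>rho f x\<bar> \<le> dnorm I f * (K * norm x)" unfolding rho_def by (rule gLam_bound[OF fI wI])
  then show "\<bar>rho f x\<bar> \<le> dnorm I f * K * norm x" by (simp add: mult.assoc)
qed simp

lemma rho_restrict: "f \<in> dual I \<Longrightarrow> x \<in> I \<Longrightarrow> rho f x = f x"
  unfolding rho_def using cont_left[OF _ subI order_refl] by blast

lemma rho_add:
  assumes f: "f \<in> dual I" and g: "g \<in> dual I"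
  shows "rho (\<lambda>x. f x + g x) = (\<lambda>x. rho f x + rho g x)"
proof
  have fI: "f \<in> dual I" "subspace I" and gI: "g \<in> dual I" "subspace I" using f g subI by auto
  fix x show "rho (\<lambda>x. f x + g x) x = rho f x + rho g x"
    unfolding rho_def by (rule Lam_add[OF gebdd[OF fI wI] gebdd[OF gI wI]])
qed

lemma rho_scale:
  assumes f: "f \<in> dual I"
  shows "rho (\<lambda>x. c * f x) = (\<lambda>x. c * rho f x)"
proof
  have fI: "f \<in> dual I" "subspace I" using f subI by auto
  fix x show "rho (\<lambda>x. c * f x) x = c * rho f x"
    unfolding rho_def by (rule Lam_scale[OF gebdd[OF fI wI]])
qed

lemma rho_dnorm:
  assumes f: "f \<in> dual I"
  shows "dnorm UNIV (rho f) \<le> dnorm I f * K"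
proof (rule dnorm_le)
  have fI: "f \<in> dual I" "subspace I" using f subI by auto
  fix x :: 'a assume "norm x \<le> 1"
  have "\<bar>rho f x\<bar> \<le> dnorm I f * (K * norm x)" unfolding rho_def by (rule gLam_bound[OF fI wI])
  also have "\<dots> \<le> dnorm I f * K"
    by (rule mult_left_mono[OF mult_left_le[OF \<open>norm x \<le> 1\<close> Kpos] dnorm_nonneg[OF fI]])
  finally show "\<bar>rho f x\<bar> \<le> dnorm I f * K" .
qed simp

lemma rho_left:
  assumes f: "f \<in> dual I"
  shows "rho (dmod_left I b f) = dmod_left UNIV b (rho f)"
proof
  fix a
  have "rho (dmod_left I b f) a = Lam (\<lambda>e. f (e * (a * b)))"
    unfolding rho_def
  proof (rule Lam_cong, rule eventually_mono[OF evI])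
    fix e assume "e \<in> I \<and> norm e \<le> K"
    then have "e * a \<in> I" using idI by auto
    then show "dmod_left I b f (e * a) = f (e * (a * b))" by (simp add: dmod_left_def mult.assoc)
  qed
  then show "rho (dmod_left I b f) a = dmod_left UNIV b (rho f) a"
    by (simp add: dmod_left_def rho_def)
qed

lemma rho_right:
  assumes Q: "\<And>f a. f \<in> dual I \<Longrightarrow> Lam (\<lambda>e. f (e * a)) = Lam (\<lambda>e. f (a * e))"
    and f: "f \<in> dual I"
  shows "rho (dmod_right I f b) = dmod_right UNIV (rho f) b"
proof
  fix a
  have fb: "dmod_right I f b \<in> dual I" using dmod_right_dual[OF f subI] idI by blast
  have "rho (dmod_right I f b) a = Lam (\<lambda>e. dmod_right I f b (a * e))"
    unfolding rho_def by (rule Q[OF fb])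
  also have "\<dots> = Lam (\<lambda>e. f ((b * a) * e))"
  proof (rule Lam_cong, rule eventually_mono[OF evI])
    fix e assume "e \<in> I \<and> norm e \<le> K"
    then have "a * e \<in> I" using idI by auto
    then show "dmod_right I f b (a * e) = f ((b * a) * e)" by (simp add: dmod_right_def mult.assoc)
  qed
  also have "\<dots> = Lam (\<lambda>e. f (e * (b * a)))" using Q[OF f] by simp
  finally show "rho (dmod_right I f b) a = dmod_right UNIV (rho f) b a"
    by (simp add: dmod_right_def rho_def)
qed

lemma Q_of:
  assumes "arens_regular I \<or> arens_regular (UNIV :: 'a set)" and f: "f \<in> dual I"
  shows "Lam (\<lambda>e. f (e * a)) = Lam (\<lambda>e. f (a * e))"
  using assms(1)
proof
  assume "arens_regular I"
  then show ?thesis using key[OF subI idI order_refl _ f] by blast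
next
  assume reg: "arens_regular (UNIV :: 'a set)"
  have "Lam (\<lambda>e. rho f (e * a)) = Lam (\<lambda>e. rho f (a * e))"
    by (rule key[OF subspace_UNIV _ _ reg rho_dual[OF f]]) auto
  moreover have "Lam (\<lambda>e. rho f (e * a)) = Lam (\<lambda>e. f (e * a))"
  proof (rule Lam_cong, rule eventually_mono[OF evI])
    fix e assume "e \<in> I \<and> norm e \<le> K"
    then have "e * a \<in> I" using idI by auto
    then show "rho f (e * a) = f (e * a)" using rho_restrict[OF f] by blast
  qed
  moreover have "Lam (\<lambda>e. rho f (a * e)) = Lam (\<lambda>e. f (a * e))"
  proof (rule Lam_cong, rule eventually_mono[OF evI])
    fix e assume "e \<in> I \<and> norm e \<le> K"
    then have "a * e \<in> I" using idI by auto
    then show "rho f (a * e) = f (a * e)" using rho_restrict[OF f] by blast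
  qed
  ultimately show ?thesis by simp
qed

end



theorem corollary3p4:
  fixes I :: "'a::{real_normed_algebra,banach} set"
  assumes "weakly_amenable TYPE('a)"
    and "closed_ideal I"
    and "has_bai I"
    and "arens_regular I \<or> arens_regular (UNIV :: 'a set)"
  shows "H1_dual_trivial I"
proof -
  have subI: "subspace I" and idI: "\<And>a x. x \<in> I \<Longrightarrow> a * x \<in> I \<and> x * a \<in> I"
    using assms(2) unfolding closed_ideal_def by auto
  obtain F :: "'a filter" and K0 where F: "F \<noteq> bot" "\<forall>\<^sub>F e in F. e \<in> I \<and> norm e \<le> K0"
    and conv: "\<forall>x\<in>I. ((\<lambda>e. e * x) \<longlongrightarrow> x) F \<and> ((\<lambda>e. x * e) \<longlongrightarrow> x) F"
    using assms(3) unfolding has_bai_def by blast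
  obtain U where U: "U \<noteq> bot" "U \<le> F" "\<And>P. eventually P U \<or> eventually (\<lambda>x. \<not> P x) U"
    using exists_ultra[OF F(1)] by blast
  define K where "K = max K0 0"
  interpret bai_setup I U K
  proof
    show "eventually (\<lambda>e. e \<in> I \<and> norm e \<le> K) U"
      using filter_leD[OF U(2) F(2)] by (rule eventually_mono) (auto simp: K_def)
    show "0 \<le> K" by (simp add: K_def)
    fix x assume "x \<in> I"
    then show "((\<lambda>e. e * x) \<longlongrightarrow> x) U" "((\<lambda>e. x * e) \<longlongrightarrow> x) U"
      using conv tendsto_mono[OF U(2)] by blast+
  qed (use subI idI U in auto)
  have Q: "\<And>f a. f \<in> dual I \<Longrightarrow> Lam (\<lambda>e. f (e * a)) = Lam (\<lambda>e. f (a * e))"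
    using Q_of[OF assms(4)] by blast
  show ?thesis unfolding H1_dual_trivial_def
  proof (intro allI impI)
    fix D assume der: "derivation_into_dual I D"
    have Dd: "\<And>a. D a \<in> dual I" and Dadd: "\<And>a b. D (a + b) = (\<lambda>x. D a x + D b x)"
      and Dsc: "\<And>c a. D (c *\<^sub>R a) = (\<lambda>x. c * D a x)"
      and Dlb: "\<And>a b. D (a * b) = (\<lambda>x. dmod_left I a (D b) x + dmod_right I (D a) b x)"
      using der unfolding derivation_into_dual_def by auto
    obtain K1 where K1: "\<And>a. dnorm I (D a) \<le> K1 * norm a"
      using der unfolding derivation_into_dual_def by blast
    define D' where "D' = (\<lambda>a. rho (D a))"
    have "derivation_into_dual UNIV D'"
      unfolding derivation_into_dual_def
    proof (intro conjI allI)
      fix a show "D' a \<in> dual UNIV" unfolding D'_def by (rule rho_dual[OF Dd])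
    next
      fix a b show "D' (a + b) = (\<lambda>x. D' a x + D' b x)"
        unfolding D'_def Dadd by (rule rho_add[OF Dd Dd])
    next
      fix c a show "D' (c *\<^sub>R a) = (\<lambda>x. c * D' a x)"
        unfolding D'_def Dsc by (rule rho_scale[OF Dd])
    next
      show "\<exists>K. \<forall>a. dnorm UNIV (D' a) \<le> K * norm a"
      proof (intro exI allI)
        fix a
        have "dnorm UNIV (D' a) \<le> dnorm I (D a) * K" unfolding D'_def by (rule rho_dnorm[OF Dd])
        also have "\<dots> \<le> (max K1 0 * norm a) * K"
        proof (rule mult_right_mono[OF _ Kpos])
          have "K1 * norm a \<le> max K1 0 * norm a" by (simp add: mult_right_mono)
          then show "dnorm I (D a) \<le> max K1 0 * norm a" using K1[of a] by linarith
        qed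
        finally show "dnorm UNIV (D' a) \<le> (max K1 0 * K) * norm a" by (simp add: mult_ac)
      qed
    next
      fix a b
      have "D' (a * b) = rho (\<lambda>x. dmod_left I a (D b) x + dmod_right I (D a) b x)"
        unfolding D'_def Dlb ..
      also have "\<dots> = (\<lambda>x. rho (dmod_left I a (D b)) x + rho (dmod_right I (D a) b) x)"
        by (rule rho_add[OF dmod_left_dual[OF Dd subI] dmod_right_dual[OF Dd subI]])
          (use idI in auto)
      also have "\<dots> = (\<lambda>x. dmod_left UNIV a (D' b) x + dmod_right UNIV (D' a) b x)"
      proof -
        have "rho (dmod_right I (D a) b) = dmod_right UNIV (rho (D a)) b"
          by (rule rho_right[OF Q Dd])
        then show ?thesis unfolding D'_def rho_left[OF Dd] by simp
      qed
      finally show "D' (a * b) = (\<lambda>x. dmod_left UNIV a (D' b) x + dmod_right UNIV (D' a) b x)" .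
    qed
    then have "inner_derivation_into_dual UNIV D'"
      using assms(1) unfolding weakly_amenable_def H1_dual_trivial_def by blast
    then obtain Z where Z: "Z \<in> dual UNIV"
      and ZD: "\<And>a. D' a = (\<lambda>x. dmod_left UNIV a Z x - dmod_right UNIV Z a x)"
      unfolding inner_derivation_into_dual_def by blast
    obtain KZ where KZ: "\<forall>x\<in>UNIV. \<bar>Z x\<bar> \<le> KZ * norm x" using dual_D(3)[OF Z] by blast
    define z where "z = (\<lambda>x. if x \<in> I then Z x else 0)"
    have z: "z \<in> dual I"
    proof (rule dualI[where K=KZ])
      fix x y assume "x \<in> I" "y \<in> I"
      then show "z (x + y) = z x + z y" using subI dual_D(1)[OF Z] by (simp add: z_def subspace_add)
    next
      fix c x assume "x \<in> I"
      then show "z (c *\<^sub>R x) = c * z x" using subI dual_D(2)[OF Z] by (simp add: z_def subspace_scale)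
    next
      fix x assume "x \<in> I"
      then show "\<bar>z x\<bar> \<le> KZ * norm x" using KZ by (simp add: z_def)
    qed (simp add: z_def)
    show "inner_derivation_into_dual I D"
      unfolding inner_derivation_into_dual_def
    proof (intro bexI[OF _ z] allI ext)
      fix a x
      show "D a x = dmod_left I a z x - dmod_right I z a x"
      proof (cases "x \<in> I")
        case True
        have "D a x = D' a x" unfolding D'_def using rho_restrict[OF Dd True] by simp
        also have "\<dots> = Z (x * a) - Z (a * x)" unfolding ZD by (simp add: dmod_left_def dmod_right_def)
        also have "\<dots> = dmod_left I a z x - dmod_right I z a x"
          using True idI by (simp add: dmod_left_def dmod_right_def z_def)
        finally show ?thesis .
      next
        case False
        then show ?thesis using dual_D(4)[OF Dd] by (simp add: dmod_left_def dmod_right_def)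
      qed
    qed
  qed
qed


end
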